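(* Let $\Gamma$ be a finite simple graph and let $\omega\ge 2$ be an integer. If $\Gamma$ is $\omega$-clique regular, then $\omega=2$ or $\omega=\omega(\Gamma)$.
   Context: A clique of order $\omega$ ($\omega$-clique) is a set of $\omega$ pairwise adjacent vertices. A graph $\Gamma$ is $\omega$-clique regular if it has a nonempty edge set and every edge of $\Gamma$ is contained in exactly one clique of order $\omega$. $\omega(\Gamma)$ denotes the clique number of $\Gamma$, the maximum order of a clique in $\Gamma$. *)

theory Defs
  imports Main
begin

definition finite_simple_graph :: "'a set \<Rightarrow> ('a \<Rightarrow> 'a \<Rightarrow> bool) \<Rightarrow> bool" where
  "finite_simple_graph V E \<longleftrightarrow> finite V \<and>
     (\<forall>x y. E x y \<longrightarrow> x \<in> V \<and> y \<in> V) \<and>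
     (\<forall>x y. E x y \<longrightarrow> E y x) \<and> (\<forall>x. \<not> E x x)"

definition is_clique :: "'a set \<Rightarrow> ('a \<Rightarrow> 'a \<Rightarrow> bool) \<Rightarrow> 'a set \<Rightarrow> bool" where
  "is_clique V E C \<longleftrightarrow> C \<subseteq> V \<and> (\<forall>x\<in>C. \<forall>y\<in>C. x \<noteq> y \<longrightarrow> E x y)"

definition is_w_clique :: "'a set \<Rightarrow> ('a \<Rightarrow> 'a \<Rightarrow> bool) \<Rightarrow> nat \<Rightarrow> 'a set \<Rightarrow> bool" where
  "is_w_clique V E w C \<longleftrightarrow> is_clique V E C \<and> finite C \<and> card C = w"

definition clique_regular :: "'a set \<Rightarrow> ('a \<Rightarrow> 'a \<Rightarrow> bool) \<Rightarrow> nat \<Rightarrow> bool" where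
  "clique_regular V E w \<longleftrightarrow> (\<exists>x y. E x y) \<and>
     (\<forall>x y. E x y \<longrightarrow> (\<exists>!C. is_w_clique V E w C \<and> x \<in> C \<and> y \<in> C))"

definition clique_number :: "'a set \<Rightarrow> ('a \<Rightarrow> 'a \<Rightarrow> bool) \<Rightarrow> nat" where
  "clique_number V E = Max {card C | C. is_clique V E C \<and> finite C}"

end

theory Submission
  imports Defs
begin

lemma sub_clique: "is_clique V E C \<Longrightarrow> A \<subseteq> C \<Longrightarrow> is_clique V E A"
  unfolding is_clique_def by blast

theorem theorem1:
  fixes V :: "'a set" and E :: "'a \<Rightarrow> 'a \<Rightarrow> bool" and w :: nat
  assumes "finite_simple_graph V E"
    and "w \<ge> 2"
    and "clique_regular V E w"
  shows "w = 2 \<or> w = clique_number V E"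
proof (cases "w = 2")
  case True then show ?thesis by simp
next
  case False
  with assms(2) have w3: "w \<ge> 3" by simp
  have fV: "finite V" using assms(1) unfolding finite_simple_graph_def by simp
  let ?S = "{card C | C. is_clique V E C \<and> finite C}"
  have fin: "finite ?S"
  proof (rule finite_subset)
    show "?S \<subseteq> {..card V}"
      using fV by (auto simp: is_clique_def intro: card_mono)
  qed simp
  obtain x y where xy: "E x y" using assms(3) unfolding clique_regular_def by blast
  then obtain C0 where "is_w_clique V E w C0"
    using assms(3) unfolding clique_regular_def by blast
  hence wS: "w \<in> ?S" unfolding is_w_clique_def by blast
  have bound: "k \<le> w" if "k \<in> ?S" for k
  proof (rule ccontr)
    assume nk: "\<not> k \<le> w"
    from that obtain C where C: "is_clique V E C" "finite C" "card C = k" by blast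
    obtain C' where C': "C' \<subseteq> C" "card C' = w + 1"
      using obtain_subset_with_card_n[of "w+1" C] nk C(3) by force
    have fC': "finite C'" using C' C(2) finite_subset by blast
    have cC': "is_clique V E C'" using sub_clique C(1) C'(1) by blast
    obtain u where u: "u \<in> C'" using C'(2) by fastforce
    have "card (C' - {u}) = w" using u C'(2) fC' by simp
    then obtain v where v: "v \<in> C' - {u}" using assms(2) by (metis all_not_in_conv card.empty not_numeral_le_zero)
    have cA: "card (C' - {u}) = w" using u C'(2) fC' by simp
    have cB: "card (C' - {v}) = w" using v C'(2) fC' by simp
    have "card (C' - {u} - {v}) = w - 1" using cA v fC' by simp
    hence "card (C' - {u} - {v}) \<ge> 2" using w3 by simp
    then obtain a b where ab: "a \<in> C' - {u} - {v}" "b \<in> C' - {u} - {v}" "a \<noteq> b"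
      by (metis One_nat_def card_le_Suc0_iff_eq not_less_eq_eq numeral_2_eq_2 finite_Diff fC')
    have Eab: "E a b" using cC' ab unfolding is_clique_def by blast
    have wA: "is_w_clique V E w (C' - {u})"
      using cA fC' sub_clique[OF cC'] unfolding is_w_clique_def by blast
    have wB: "is_w_clique V E w (C' - {v})"
      using cB fC' sub_clique[OF cC'] unfolding is_w_clique_def by blast
    have "C' - {u} \<noteq> C' - {v}" using u v by blast
    moreover have "\<exists>!D. is_w_clique V E w D \<and> a \<in> D \<and> b \<in> D"
      using assms(3) Eab unfolding clique_regular_def by blast
    ultimately show False using wA wB ab by blast
  qed
  have "Max ?S = w"
    using fin wS bound by (intro Max_eqI) auto
  then show ?thesis unfolding clique_number_def by simp
qed

end
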